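(* Let $G=(V,E)$ be a finite simple undirected graph with $k$ vertices and let $n\ge k$ be an integer. Then $Y(n,G)\le D(n,k)$, with equality only if $G$ is the complete graph $K_k$.
   Context: A walk of length $n-1$ in a graph is a sequence of $n$ vertices $v_1,\dots,v_n$ such that $\{v_i,v_{i+1}\}$ is an edge for each $i$. $Y(n,G)$ denotes the number of walks of length $n-1$ in $G$ that visit every vertex of $G$ at least once. $D(n,k)=Y(n,K_k)$, where $K_k$ is the complete graph on $k$ (labelled) vertices. *)

theory Defs
  imports Main
begin

definition simple_graph :: "'a set \<Rightarrow> ('a \<Rightarrow> 'a \<Rightarrow> bool) \<Rightarrow> bool" where
  "simple_graph V E \<longleftrightarrow> finite V \<and> (\<forall>x y. E x y \<longrightarrow> x \<in> V \<and> y \<in> V)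
     \<and> (\<forall>x y. E x y \<longrightarrow> E y x) \<and> (\<forall>x. \<not> E x x)"

text \<open>A walk of length n-1: a sequence of n vertices v_1..v_n (a list of length n)
with consecutive vertices adjacent.\<close>
definition is_walk :: "'a set \<Rightarrow> ('a \<Rightarrow> 'a \<Rightarrow> bool) \<Rightarrow> nat \<Rightarrow> 'a list \<Rightarrow> bool" where
  "is_walk V E n ws \<longleftrightarrow> length ws = n \<and> set ws \<subseteq> V
     \<and> (\<forall>i. i + 1 < n \<longrightarrow> E (ws ! i) (ws ! (i + 1)))"

definition Y :: "nat \<Rightarrow> 'a set \<Rightarrow> ('a \<Rightarrow> 'a \<Rightarrow> bool) \<Rightarrow> nat" where
  "Y n V E = card {ws. is_walk V E n ws \<and> V \<subseteq> set ws}"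

definition D :: "nat \<Rightarrow> nat \<Rightarrow> nat" where
  "D n k = Y n {0..<k} (\<lambda>x y. x \<noteq> y)"

definition is_complete :: "'a set \<Rightarrow> ('a \<Rightarrow> 'a \<Rightarrow> bool) \<Rightarrow> bool" where
  "is_complete V E \<longleftrightarrow> (\<forall>x\<in>V. \<forall>y\<in>V. x \<noteq> y \<longrightarrow> E x y)"

end

theory Submission
  imports Defs
begin

lemma walk_snoc:
  assumes "is_walk V E n ws" "n \<ge> 1" "x \<in> V" "E (last ws) x"
  shows "is_walk V E (Suc n) (ws @ [x])"
proof -
  have len: "length ws = n" and sub: "set ws \<subseteq> V"
   and st: "\<forall>i. i + 1 < n \<longrightarrow> E (ws ! i) (ws ! (i + 1))"
    using assms(1) by (auto simp: is_walk_def)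
  have lst: "last ws = ws ! (n - 1)" using len assms(2) by (cases ws) (auto simp: last_conv_nth)
  have "\<forall>i. i + 1 < Suc n \<longrightarrow> E ((ws @ [x]) ! i) ((ws @ [x]) ! (i + 1))"
  proof (intro allI impI)
    fix i assume i: "i + 1 < Suc n"
    show "E ((ws @ [x]) ! i) ((ws @ [x]) ! (i + 1))"
    proof (cases "i + 1 < n")
      case True thus ?thesis using st len by (simp add: nth_append)
    next
      case False hence "i = n - 1" using i by simp
      thus ?thesis using assms(2,4) lst len by (simp add: nth_append)
    qed
  qed
  thus ?thesis using len sub assms(3) by (simp add: is_walk_def)
qed

lemma exists_walk:
  fixes a b k :: nat
  assumes "a < k" "b < k" "a \<noteq> b" "n \<ge> k"
  shows "\<exists>ws. is_walk {0..<k} (\<lambda>x y. x \<noteq> y) n ws \<and> {0..<k} \<subseteq> set ws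
           \<and> ws ! 0 = a \<and> ws ! 1 = b"
  using assms(4)
proof (induction n rule: dec_induct)
  case base
  define L where "L = a # b # filter (\<lambda>x. x \<noteq> a \<and> x \<noteq> b) [0..<k]"
  have d: "distinct L" using assms unfolding L_def by auto
  have s: "set L = {0..<k}" using assms unfolding L_def by auto
  have "length L = k" using distinct_card[OF d] s by simp
  moreover have "\<forall>i. i + 1 < k \<longrightarrow> L ! i \<noteq> L ! (i + 1)"
    using d calculation by (simp add: nth_eq_iff_index_eq)
  ultimately have "is_walk {0..<k} (\<lambda>x y. x \<noteq> y) k L" using s by (simp add: is_walk_def)
  thus ?case using s by (auto simp: L_def)
next
  case (step m)
  then obtain ws where w: "is_walk {0..<k} (\<lambda>x y. x \<noteq> y) m ws" "{0..<k} \<subseteq> set ws"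
     "ws ! 0 = a" "ws ! 1 = b" by blast
  have m1: "m \<ge> 1" using step assms by simp
  have lm: "length ws = m" using w(1) by (simp add: is_walk_def)
  define x where "x = (if last ws = a then b else a)"
  have "is_walk {0..<k} (\<lambda>x y. x \<noteq> y) (Suc m) (ws @ [x])"
    by (rule walk_snoc[OF w(1) m1]) (use assms in \<open>auto simp: x_def\<close>)
  moreover have "ws ! 0 = (ws @ [x]) ! 0" "ws ! 1 = (ws @ [x]) ! 1"
    using lm m1 step assms by (auto simp: nth_append)
  ultimately show ?case using w
    by (intro exI[of _ "ws @ [x]"]) auto
qed

theorem mainTheorem2:
  fixes V :: "'a set" and E :: "'a \<Rightarrow> 'a \<Rightarrow> bool" and n k :: nat
  assumes "simple_graph V E" and "card V = k" and "n \<ge> k"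
  shows "Y n V E \<le> D n k \<and> (Y n V E = D n k \<longrightarrow> is_complete V E)"
proof -
  have fin: "finite V" and inV: "\<And>x y. E x y \<Longrightarrow> x \<in> V \<and> y \<in> V"
    and irr: "\<And>x. \<not> E x x" using assms(1) by (auto simp: simple_graph_def)
  obtain f where f: "bij_betw f V {0..<k}"
    using finite_same_card_bij[OF fin, of "{0..<k}"] assms(2) by auto
  have inj: "inj_on f V" and fV: "f ` V = {0..<k}" using f by (auto simp: bij_betw_def)
  define S where "S = {ws. is_walk V E n ws \<and> V \<subseteq> set ws}"
  define T where "T = {ws. is_walk {0..<k} (\<lambda>x y. (x::nat) \<noteq> y) n ws \<and> {0..<k} \<subseteq> set ws}"
  have YS: "Y n V E = card S" by (simp add: Y_def S_def)
  have DT: "D n k = card T" by (simp add: D_def Y_def T_def)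
  have finT: "finite T"
  proof -
    have "T \<subseteq> {xs. set xs \<subseteq> {0..<k} \<and> length xs = n}" by (auto simp: T_def is_walk_def)
    thus ?thesis using finite_lists_length_eq[of "{0..<k}" n] finite_subset by auto
  qed
  have injm: "inj_on (map f) S"
  proof (rule inj_onI)
    fix xs ys assume "xs \<in> S" "ys \<in> S" "map f xs = map f ys"
    moreover have "set xs \<subseteq> V" "set ys \<subseteq> V" using calculation by (auto simp: S_def is_walk_def)
    ultimately show "xs = ys" using inj_on_map_eq_map[OF inj_on_subset[OF inj, of "set xs \<union> set ys"]]
      by auto
  qed
  have img: "map f ` S \<subseteq> T"
  proof
    fix w assume "w \<in> map f ` S"
    then obtain ws where ws: "ws \<in> S" "w = map f ws" by auto
    have l: "length ws = n" and sV: "set ws \<subseteq> V" and cov: "V \<subseteq> set ws"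
      and st: "\<forall>i. i + 1 < n \<longrightarrow> E (ws ! i) (ws ! (i + 1))"
      using ws(1) by (auto simp: S_def is_walk_def)
    have "\<forall>i. i + 1 < n \<longrightarrow> w ! i \<noteq> w ! (i + 1)"
    proof (intro allI impI)
      fix i assume i: "i + 1 < n"
      have e: "E (ws ! i) (ws ! (i + 1))" using st i by blast
      hence "ws ! i \<noteq> ws ! (i+1)" using irr by metis
      moreover have "ws ! i \<in> V" "ws ! (i+1) \<in> V" using e inV by auto
      ultimately have "f (ws ! i) \<noteq> f (ws ! (i+1))" using inj by (auto simp: inj_on_def)
      thus "w ! i \<noteq> w ! (i + 1)" using ws(2) l i by simp
    qed
    moreover have "set w \<subseteq> {0..<k}" using sV fV ws(2) by auto
    moreover have "{0..<k} \<subseteq> set w" using image_mono[OF cov, of f] fV ws(2) by simp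
    ultimately show "w \<in> T" using l ws(2) by (simp add: T_def is_walk_def)
  qed
  have le: "card S \<le> card T"
    using card_inj_on_le[OF injm img finT] .
  have eq: "is_complete V E" if "card S = card T"
  proof (rule ccontr)
    assume "\<not> is_complete V E"
    then obtain u v where uv: "u \<in> V" "v \<in> V" "u \<noteq> v" "\<not> E u v" by (auto simp: is_complete_def)
    have a: "f u < k" "f v < k" "f u \<noteq> f v" using uv f by (auto simp: bij_betw_def inj_on_def)
    obtain w where w: "is_walk {0..<k} (\<lambda>x y. x \<noteq> y) n w" "{0..<k} \<subseteq> set w"
      "w ! 0 = f u" "w ! 1 = f v" using exists_walk[OF a assms(3)] by blast
    have k2: "k \<ge> 2" using a by linarith
    have wT: "w \<in> T" using w by (simp add: T_def)
    have "w \<notin> map f ` S"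
    proof
      assume "w \<in> map f ` S"
      then obtain ws where ws: "ws \<in> S" "w = map f ws" by auto
      have l: "length ws = n" and sV: "set ws \<subseteq> V"
        and st: "\<forall>i. i + 1 < n \<longrightarrow> E (ws ! i) (ws ! (i + 1))"
        using ws(1) by (auto simp: S_def is_walk_def)
      have n2: "0 + 1 < n" using k2 assms(3) by simp
      have e: "E (ws ! 0) (ws ! 1)" using st n2 by auto
      have i0: "ws ! 0 \<in> V" "ws ! 1 \<in> V" using e inV by auto
      have "f (ws ! 0) = f u" "f (ws ! 1) = f v" using w(3,4) ws(2) l n2 by auto
      hence "ws ! 0 = u" "ws ! 1 = v" using i0 uv inj by (auto simp: inj_on_def)
      thus False using e uv by simp
    qed
    hence "map f ` S \<subset> T" using img wT by blast
    hence "card (map f ` S) < card T" using psubset_card_mono finT by blast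
    thus False using that card_image[OF injm] by simp
  qed
  show ?thesis using le eq YS DT by simp
qed

end
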